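(* Let $E(\lambda,\eta,\xi)$ be analytic in a neighborhood of $0\in\mathbb{C}^3$ with Taylor coefficients $a_{(i,j,k)}\in(\sqrt{-1})^{j+k}\mathbb{R}$, such that $E(\lambda,-\eta,\xi)=E(\lambda,\eta,\xi)$, $E(0,0,\xi)\equiv0$, $a_{(1,0,0)}=0$, $a_{(2,0,0)}\ne0$, $a_{(0,2,0)}\ne0$. Write near the origin $E=Wh$ with $h(0,0,0)\ne0$ and $W(\lambda;\eta,\xi)=\lambda^2+b(\eta,\xi)\lambda+c(\eta,\xi)$, $b=b_{01}\xi+b_{02}\xi^2+b_{20}\eta^2+O(|\eta|+|\xi|)^3$, $c=\eta^2(c_{20}+c_{21}\xi+O(|\eta|+|\xi|)^2)$, and assume $c_{20}>0$. Define ${\rm ind}_1=b_{02}$, ${\rm ind}_2=b_{20}$, ${\rm ind}_3=c_{21}^2(b_{01}^2b_{20}^2-2b_{01}b_{20}c_{21}+4b_{02}b_{20}c_{20}+c_{21}^2)$, ${\rm ind}_4=-b_{01}b_{20}c_{21}+2b_{02}b_{20}c_{20}+c_{21}^2$, ${\rm ind}_5=-b_{01}c_{21}+b_{02}c_{20}$. Suppose one of: (i) ${\rm ind}_1<0$ or ${\rm ind}_2<0$; (ii) ${\rm ind}_1>0$, ${\rm ind}_2>0$, ${\rm ind}_3>0$ and ${\rm ind}_4\le0$; (iii) ${\rm ind}_1>0$, ${\rm ind}_2>0$, ${\rm ind}_3>0$ and ${\rm ind}_5<0$. Then for every $r>0$ there exist real $(\eta,\xi)$ with $0<|\eta|+|\xi|<r$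 and a root $\lambda$ of $W(\cdot;\eta,\xi)$ (a zero of $E(\cdot,\eta,\xi)$ near $0$) with $\Re\lambda>0$.
   Context: In the paper, $E$ is the periodic Evans–Lopatinsky determinant of a planar roll wave of the inviscid Saint-Venant equations, and the conclusion is low-frequency spectral instability. Under the hypotheses, $b_{02},b_{20},c_{20}\in\mathbb{R}$ and $b_{01},c_{21}\in i\mathbb{R}$, so the indices are real. *)

theory Defs
  imports "HOL-Analysis.Analysis"
begin

text \<open>A function analytic near 0 in C^3 is one admitting such a representation
  for some rho > 0; then a are its Taylor coefficients.\<close>
definition ps3 :: "(nat \<Rightarrow> nat \<Rightarrow> nat \<Rightarrow> complex) \<Rightarrow> real
    \<Rightarrow> (complex \<Rightarrow> complex \<Rightarrow> complex \<Rightarrow> complex) \<Rightarrow> bool" where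
  "ps3 a rho F \<longleftrightarrow> rho > 0 \<and>
     (\<forall>x y z. cmod x < rho \<longrightarrow> cmod y < rho \<longrightarrow> cmod z < rho \<longrightarrow>
        ((\<lambda>(i,j,k). a i j k * x ^ i * y ^ j * z ^ k) has_sum F x y z) UNIV)"

definition ps2 :: "(nat \<Rightarrow> nat \<Rightarrow> complex) \<Rightarrow> real
    \<Rightarrow> (complex \<Rightarrow> complex \<Rightarrow> complex) \<Rightarrow> bool" where
  "ps2 a rho F \<longleftrightarrow> rho > 0 \<and>
     (\<forall>y z. cmod y < rho \<longrightarrow> cmod z < rho \<longrightarrow>
        ((\<lambda>(j,k). a j k * y ^ j * z ^ k) has_sum F y z) UNIV)"

end

theory Submission
  imports Defs
begin

definition Dq :: "complex \<Rightarrow> complex \<Rightarrow> real" where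
  "Dq b c = (Re b)^2 * Re c + Re b * Im b * Im c - (Im c)^2"

lemma pow_bound_aux:
  fixes y z s :: real and j k p n :: nat
  assumes "0 \<le> y" "0 \<le> z" "y + z \<le> s" "p \<le> j" "n \<le> j + k" "p \<le> n" "0 < s"
  shows "y^j * z^k \<le> y^p * (y+z)^(n-p) * (s^(j+k) / s^n)"
proof -
  let ?m = "y + z"
  have m0: "0 \<le> ?m" using assms by simp
  have "y^j = y^p * y^(j-p)" using assms by (simp add: power_add[symmetric])
  also have "\<dots> \<le> y^p * ?m^(j-p)" using assms by (intro mult_left_mono power_mono) auto
  finally have 1: "y^j \<le> y^p * ?m^(j-p)" .
  have 2: "z^k \<le> ?m^k" using assms by (intro power_mono) auto
  have "y^j * z^k \<le> y^p * ?m^(j-p) * ?m^k"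
    using 1 2 assms by (intro mult_mono) auto
  also have "\<dots> = y^p * ?m^(n-p) * ?m^(j+k-n)"
  proof -
    have "?m^(j-p) * ?m^k = ?m^(n-p) * ?m^(j+k-n)"
      using assms by (simp add: power_add[symmetric])
    then show ?thesis by (simp add: mult.assoc)
  qed
  also have "\<dots> \<le> y^p * ?m^(n-p) * s^(j+k-n)"
    using assms m0 by (intro mult_left_mono power_mono) auto
  also have "s^(j+k-n) = s^(j+k) / s^n"
    using assms by (simp add: power_diff)
  finally show ?thesis .
qed

lemma ps2_tail:
  assumes ps: "ps2 a R F" and S: "finite S"
    and sup: "\<And>j k. (j,k) \<notin> S \<Longrightarrow> a j k \<noteq> 0 \<Longrightarrow> p \<le> j \<and> n \<le> j + k" and pn: "p \<le> n"
  shows "\<exists>s>0. \<exists>K. \<forall>y z. cmod y + cmod z \<le> s \<longrightarrow>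
     cmod (F y z - (\<Sum>(j,k)\<in>S. a j k * y^j * z^k)) \<le> K * cmod y ^ p * (cmod y + cmod z)^(n-p)"
proof -
  have R: "R > 0" and hs: "\<And>y z. cmod y < R \<Longrightarrow> cmod z < R \<Longrightarrow>
        ((\<lambda>(j,k). a j k * y ^ j * z ^ k) has_sum F y z) UNIV"
    using ps unfolding ps2_def by auto
  define s where "s = R / 2"
  have s: "0 < s" "s < R" using R by (auto simp: s_def)
  define g where "g = (\<lambda>(j,k). cmod (a j k) * s^(j+k))"
  have "(\<lambda>(j,k). a j k * complex_of_real s ^ j * complex_of_real s ^ k) summable_on UNIV"
    using hs[of "complex_of_real s" "complex_of_real s"] s unfolding summable_on_def by auto
  then have "(\<lambda>x. norm ((\<lambda>(j,k). a j k * complex_of_real s ^ j * complex_of_real s ^ k) x)) summable_on UNIV"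
    using summable_on_iff_abs_summable_on_complex by blast
  moreover have "(\<lambda>x. norm ((\<lambda>(j,k). a j k * complex_of_real s ^ j * complex_of_real s ^ k) x)) = g"
    using s by (auto simp: g_def norm_mult norm_power power_add fun_eq_iff)
  ultimately have gs: "g summable_on UNIV" by simp
  have g0: "\<And>x. 0 \<le> g x" using s by (auto simp: g_def)
  define A where "A = infsum g UNIV"
  show ?thesis
  proof (rule exI[of _ s], intro conjI s(1) exI[of _ "A / s^n"] allI impI)
    fix y z :: complex
    assume yz: "cmod y + cmod z \<le> s"
    define f where "f = (\<lambda>(j,k). a j k * y ^ j * z ^ k)"
    define C where "C = cmod y ^ p * (cmod y + cmod z)^(n-p) / s^n"
    have C0: "0 \<le> C" using s by (auto simp: C_def)
    have "cmod y < R" "cmod z < R" using yz s norm_ge_zero[of y] norm_ge_zero[of z] by linarith+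
    then have hf: "(f has_sum F y z) UNIV" using hs f_def by simp
    have hS: "(f has_sum (\<Sum>(j,k)\<in>S. a j k * y^j * z^k)) S"
      using has_sum_finite[OF S, of f] by (simp add: f_def case_prod_beta)
    have hD: "(f has_sum (F y z - (\<Sum>(j,k)\<in>S. a j k * y^j * z^k))) (UNIV - S)"
      by (rule has_sum_Diff[OF hf hS]) auto
    have pt: "norm (f x) \<le> C * g x" if "x \<in> UNIV - S" for x
    proof -
      obtain j k where x: "x = (j,k)" by force
      show ?thesis
      proof (cases "a j k = 0")
        case True then show ?thesis using C0 g0 by (simp add: x f_def)
      next
        case False
        then have jk: "p \<le> j" "n \<le> j + k" using sup[of j k] that x by auto
        have "cmod y ^ j * cmod z ^ k \<le> cmod y ^ p * (cmod y + cmod z)^(n-p) * (s^(j+k) / s^n)"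
          by (rule pow_bound_aux) (use jk yz s pn in auto)
        then have "cmod (a j k) * (cmod y ^ j * cmod z ^ k) \<le> cmod (a j k) * (cmod y ^ p * (cmod y + cmod z)^(n-p) * (s^(j+k) / s^n))"
          by (intro mult_left_mono) auto
        moreover have "norm (f x) = cmod (a j k) * (cmod y ^ j * cmod z ^ k)"
          by (simp add: x f_def norm_mult norm_power)
        moreover have "C * g x = cmod (a j k) * (cmod y ^ p * (cmod y + cmod z)^(n-p) * (s^(j+k) / s^n))"
          by (simp add: x g_def C_def divide_inverse mult_ac)
        ultimately show ?thesis by simp
      qed
    qed
    have gsD: "g summable_on (UNIV - S)" using gs summable_on_subset_banach by blast
    have Cg: "(\<lambda>x. C * g x) summable_on (UNIV - S)" using gsD summable_on_cmult_right by blast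
    have fabs: "(\<lambda>x. norm (f x)) summable_on (UNIV - S)"
      by (rule Infinite_Sum.abs_summable_on_comparison_test'[OF Cg]) (use pt in auto)
    have "cmod (F y z - (\<Sum>(j,k)\<in>S. a j k * y^j * z^k)) = norm (infsum f (UNIV - S))"
      using infsumI[OF hD] by simp
    also have "\<dots> \<le> infsum (\<lambda>x. norm (f x)) (UNIV - S)" by (rule norm_infsum_bound[OF fabs])
    also have "\<dots> \<le> infsum (\<lambda>x. C * g x) (UNIV - S)"
      by (rule infsum_mono[OF fabs Cg]) (use pt in auto)
    also have "\<dots> = C * infsum g (UNIV - S)" by (rule infsum_cmult_right') 
    also have "\<dots> \<le> C * A" unfolding A_def
      by (intro mult_left_mono C0 infsum_mono_neutral gsD gs) (auto simp: g0)
    finally show "cmod (F y z - (\<Sum>(j,k)\<in>S. a j k * y^j * z^k)) \<le> A / s^n * cmod y ^ p * (cmod y + cmod z)^(n-p)"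
      by (simp add: C_def divide_inverse mult_ac)
  qed
qed

lemma norm_div_le:
  fixes e :: complex and K x M :: real and k m :: nat
  assumes "x > 0" "cmod e \<le> K * x^N" "N = k + m"
  shows "cmod (e / complex_of_real (x^k)) \<le> K * x^m"
proof -
  have "cmod (e / complex_of_real (x^k)) = cmod e / x^k" using assms by (simp add: norm_divide norm_power)
  also have "\<dots> \<le> K * x^(k+m) / x^k" using assms(1,2) unfolding assms(3) by (intro divide_right_mono) auto
  also have "\<dots> = K * x^m" using assms by (simp add: power_add)
  finally show ?thesis .
qed

lemma tendsto_pow0:
  assumes "n > 0" shows "((\<lambda>\<sigma>::real. K * \<sigma>^n) \<longlongrightarrow> 0) (at_right 0)"
proof -
  have "((\<lambda>\<sigma>::real. K * \<sigma>^n) \<longlongrightarrow> K * 0^n) (at_right 0)" by (intro tendsto_intros)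
  then show ?thesis using assms by (simp add: zero_power)
qed

lemma tendsto_ofreal_pow0:
  assumes "n > 0" shows "((\<lambda>\<sigma>::real. complex_of_real (\<sigma>^n)) \<longlongrightarrow> 0) (at_right 0)"
proof -
  have "((\<lambda>\<sigma>::real. complex_of_real (\<sigma>^n)) \<longlongrightarrow> complex_of_real (0^n)) (at_right 0)" by (intro tendsto_intros)
  then show ?thesis using assms by (simp add: zero_power)
qed

lemma line_limits:
  fixes B C :: "complex \<Rightarrow> complex \<Rightarrow> complex" and b1 b2 b3 c0 c1 :: complex
    and t s sb sc Kb Kc :: real
  assumes Bb: "\<forall>y z. cmod y + cmod z \<le> sb \<longrightarrow> cmod (B y z - (b1 * z + b2 * z^2 + b3 * y^2)) \<le> Kb * (cmod y + cmod z)^3"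
    and Cb: "\<forall>y z. cmod y + cmod z \<le> sc \<longrightarrow> cmod (C y z - (c0 * y^2 + c1 * y^2 * z)) \<le> Kc * cmod y^2 * (cmod y + cmod z)^2"
    and sb: "sb > 0" and sc: "sc > 0"
  shows "((\<lambda>\<sigma>. B (of_real (t*\<sigma>)) (of_real (s*\<sigma>)) / of_real \<sigma>) \<longlongrightarrow> b1 * of_real s) (at_right 0)"
    and "((\<lambda>\<sigma>. (B (of_real (t*\<sigma>)) (of_real (s*\<sigma>)) - b1 * of_real (s*\<sigma>)) / of_real (\<sigma>^2))
            \<longlongrightarrow> b2 * of_real (s^2) + b3 * of_real (t^2)) (at_right 0)"
    and "((\<lambda>\<sigma>. C (of_real (t*\<sigma>)) (of_real (s*\<sigma>)) / of_real (\<sigma>^2)) \<longlongrightarrow> c0 * of_real (t^2)) (at_right 0)"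
    and "((\<lambda>\<sigma>. (C (of_real (t*\<sigma>)) (of_real (s*\<sigma>)) - c0 * of_real ((t*\<sigma>)^2)) / of_real (\<sigma>^3))
            \<longlongrightarrow> c1 * of_real (t^2 * s)) (at_right 0)"
    and "((\<lambda>\<sigma>. B (of_real (t*\<sigma>)) (of_real (s*\<sigma>))) \<longlongrightarrow> 0) (at_right 0)"
    and "((\<lambda>\<sigma>. C (of_real (t*\<sigma>)) (of_real (s*\<sigma>))) \<longlongrightarrow> 0) (at_right 0)"
proof -
  define BB where "BB = (\<lambda>\<sigma>. B (of_real (t*\<sigma>)) (of_real (s*\<sigma>)))"
  define CC where "CC = (\<lambda>\<sigma>. C (of_real (t*\<sigma>)) (of_real (s*\<sigma>)))"
  define M where "M = \<bar>t\<bar> + \<bar>s\<bar>"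
  have M0: "M \<ge> 0" by (simp add: M_def)
  define eb where "eb = (\<lambda>\<sigma>. BB \<sigma> - (b1 * of_real (s*\<sigma>) + b2 * of_real (s*\<sigma>)^2 + b3 * of_real (t*\<sigma>)^2))"
  define ec where "ec = (\<lambda>\<sigma>. CC \<sigma> - (c0 * of_real (t*\<sigma>)^2 + c1 * of_real (t*\<sigma>)^2 * of_real (s*\<sigma>)))"
  have "((\<lambda>\<sigma>. \<sigma> * M) \<longlongrightarrow> 0 * M) (at_right 0)"
    by (intro tendsto_intros)
  then have evm: "eventually (\<lambda>\<sigma>. \<sigma> * M < min sb sc) (at_right 0)"
    using sb sc by (intro order_tendstoD(2)) auto
  have evp: "eventually (\<lambda>\<sigma>. \<sigma> > 0) (at_right (0::real))"
    by (simp add: eventually_at_right_less)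
  have ev: "eventually (\<lambda>\<sigma>. \<sigma> > 0 \<and> \<sigma> * M < min sb sc) (at_right 0)"
    using evm evp by eventually_elim auto
  have nrm: "cmod (complex_of_real (t*\<sigma>)) + cmod (complex_of_real (s*\<sigma>)) = \<sigma> * M" if "\<sigma> > 0" for \<sigma>
    using that by (simp only: norm_of_real M_def abs_mult) (simp add: algebra_simps)
  have ebb: "eventually (\<lambda>\<sigma>. cmod (eb \<sigma>) \<le> (Kb * M^3) * \<sigma>^3) (at_right 0)"
    using ev
  proof eventually_elim
    case (elim \<sigma>)
    then have "cmod (eb \<sigma>) \<le> Kb * (\<sigma> * M)^3"
      using Bb[rule_format, of "complex_of_real (t*\<sigma>)" "complex_of_real (s*\<sigma>)"] nrm[of \<sigma>]
      by (simp add: eb_def BB_def)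
    then show ?case by (simp add: power_mult_distrib mult_ac)
  qed
  have ecb: "eventually (\<lambda>\<sigma>. cmod (ec \<sigma>) \<le> (Kc * t^2 * M^2) * \<sigma>^4) (at_right 0)"
    using ev
  proof eventually_elim
    case (elim \<sigma>)
    then have "cmod (ec \<sigma>) \<le> Kc * cmod (complex_of_real (t*\<sigma>))^2 * (\<sigma> * M)^2"
      using Cb[rule_format, of "complex_of_real (t*\<sigma>)" "complex_of_real (s*\<sigma>)"] nrm[of \<sigma>]
      by (simp add: ec_def CC_def)
    also have "cmod (complex_of_real (t*\<sigma>))^2 = t^2 * \<sigma>^2"
      by (simp only: norm_of_real power2_abs) (simp add: power_mult_distrib)
    finally show ?case by (simp add: power_mult_distrib mult_ac power_add[symmetric])
  qed
  have z1: "((\<lambda>\<sigma>. (Kb * M^3) * \<sigma>^2) \<longlongrightarrow> 0) (at_right 0)"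
    by (rule tendsto_pow0) auto
  have z2: "((\<lambda>\<sigma>. (Kb * M^3) * \<sigma>^1) \<longlongrightarrow> 0) (at_right 0)"
    by (rule tendsto_pow0) auto
  have z3: "((\<lambda>\<sigma>. (Kc * t^2 * M^2) * \<sigma>^2) \<longlongrightarrow> 0) (at_right 0)"
    by (rule tendsto_pow0) auto
  have z4: "((\<lambda>\<sigma>. (Kc * t^2 * M^2) * \<sigma>^1) \<longlongrightarrow> 0) (at_right 0)"
    by (rule tendsto_pow0) auto
  have eb1: "((\<lambda>\<sigma>. eb \<sigma> / of_real (\<sigma>^1)) \<longlongrightarrow> 0) (at_right 0)"
    apply (rule Lim_null_comparison[OF _ z1])
    using ebb evp by eventually_elim (rule norm_div_le[where k=1 and m=2 and N=3], auto)
  have eb2: "((\<lambda>\<sigma>. eb \<sigma> / of_real (\<sigma>^2)) \<longlongrightarrow> 0) (at_right 0)"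
    apply (rule Lim_null_comparison[OF _ z2])
    using ebb evp by eventually_elim (rule norm_div_le[where k=2 and m=1 and N=3], auto)
  have ec2: "((\<lambda>\<sigma>. ec \<sigma> / of_real (\<sigma>^2)) \<longlongrightarrow> 0) (at_right 0)"
    apply (rule Lim_null_comparison[OF _ z3])
    using ecb evp by eventually_elim (rule norm_div_le[where k=2 and m=2 and N=4], auto)
  have ec3: "((\<lambda>\<sigma>. ec \<sigma> / of_real (\<sigma>^3)) \<longlongrightarrow> 0) (at_right 0)"
    apply (rule Lim_null_comparison[OF _ z4])
    using ecb evp by eventually_elim (rule norm_div_le[where k=3 and m=1 and N=4], auto)
  have ofr: "((\<lambda>\<sigma>. complex_of_real \<sigma>) \<longlongrightarrow> 0) (at_right 0)"
    using tendsto_ofreal_pow0[of 1] by simp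
  show L1: "((\<lambda>\<sigma>. B (of_real (t*\<sigma>)) (of_real (s*\<sigma>)) / of_real \<sigma>) \<longlongrightarrow> b1 * of_real s) (at_right 0)"
  proof -
    have "((\<lambda>\<sigma>. b1 * of_real s + (b2 * of_real (s^2) + b3 * of_real (t^2)) * of_real \<sigma> + eb \<sigma> / of_real (\<sigma>^1))
       \<longlongrightarrow> b1 * of_real s + (b2 * of_real (s^2) + b3 * of_real (t^2)) * 0 + 0) (at_right 0)"
      by (intro tendsto_intros ofr eb1)
    moreover have "eventually (\<lambda>\<sigma>. b1 * of_real s + (b2 * of_real (s^2) + b3 * of_real (t^2)) * of_real \<sigma> + eb \<sigma> / of_real (\<sigma>^1)
        = B (of_real (t*\<sigma>)) (of_real (s*\<sigma>)) / of_real \<sigma>) (at_right 0)"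
      using evp by eventually_elim (simp add: eb_def BB_def field_simps power2_eq_square)
    ultimately show ?thesis using tendsto_cong by force
  qed
  show L2: "((\<lambda>\<sigma>. (B (of_real (t*\<sigma>)) (of_real (s*\<sigma>)) - b1 * of_real (s*\<sigma>)) / of_real (\<sigma>^2))
            \<longlongrightarrow> b2 * of_real (s^2) + b3 * of_real (t^2)) (at_right 0)"
  proof -
    have "((\<lambda>\<sigma>. (b2 * of_real (s^2) + b3 * of_real (t^2)) + eb \<sigma> / of_real (\<sigma>^2))
       \<longlongrightarrow> (b2 * of_real (s^2) + b3 * of_real (t^2)) + 0) (at_right 0)"
      by (intro tendsto_intros eb2)
    moreover have "eventually (\<lambda>\<sigma>. (b2 * of_real (s^2) + b3 * of_real (t^2)) + eb \<sigma> / of_real (\<sigma>^2)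
        = (B (of_real (t*\<sigma>)) (of_real (s*\<sigma>)) - b1 * of_real (s*\<sigma>)) / of_real (\<sigma>^2)) (at_right 0)"
      using evp by eventually_elim (simp add: eb_def BB_def field_simps power2_eq_square)
    ultimately show ?thesis using tendsto_cong by force
  qed
  show L3: "((\<lambda>\<sigma>. C (of_real (t*\<sigma>)) (of_real (s*\<sigma>)) / of_real (\<sigma>^2)) \<longlongrightarrow> c0 * of_real (t^2)) (at_right 0)"
  proof -
    have "((\<lambda>\<sigma>. c0 * of_real (t^2) + c1 * of_real (t^2 * s) * of_real \<sigma> + ec \<sigma> / of_real (\<sigma>^2))
       \<longlongrightarrow> c0 * of_real (t^2) + c1 * of_real (t^2 * s) * 0 + 0) (at_right 0)"
      by (intro tendsto_intros ofr ec2)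
    moreover have "eventually (\<lambda>\<sigma>. c0 * of_real (t^2) + c1 * of_real (t^2 * s) * of_real \<sigma> + ec \<sigma> / of_real (\<sigma>^2)
        = C (of_real (t*\<sigma>)) (of_real (s*\<sigma>)) / of_real (\<sigma>^2)) (at_right 0)"
      using evp by eventually_elim (simp add: ec_def CC_def field_simps power2_eq_square)
    ultimately show ?thesis using tendsto_cong by force
  qed
  show L4: "((\<lambda>\<sigma>. (C (of_real (t*\<sigma>)) (of_real (s*\<sigma>)) - c0 * of_real ((t*\<sigma>)^2)) / of_real (\<sigma>^3))
            \<longlongrightarrow> c1 * of_real (t^2 * s)) (at_right 0)"
  proof -
    have "((\<lambda>\<sigma>. c1 * of_real (t^2 * s) + ec \<sigma> / of_real (\<sigma>^3))
       \<longlongrightarrow> c1 * of_real (t^2 * s) + 0) (at_right 0)"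
      by (intro tendsto_intros ec3)
    moreover have "eventually (\<lambda>\<sigma>. c1 * of_real (t^2 * s) + ec \<sigma> / of_real (\<sigma>^3)
        = (C (of_real (t*\<sigma>)) (of_real (s*\<sigma>)) - c0 * of_real ((t*\<sigma>)^2)) / of_real (\<sigma>^3)) (at_right 0)"
      using evp by eventually_elim (simp add: ec_def CC_def field_simps power2_eq_square power3_eq_cube)
    ultimately show ?thesis using tendsto_cong by force
  qed
  show "((\<lambda>\<sigma>. B (of_real (t*\<sigma>)) (of_real (s*\<sigma>))) \<longlongrightarrow> 0) (at_right 0)"
  proof -
    have "((\<lambda>\<sigma>. of_real \<sigma> * (B (of_real (t*\<sigma>)) (of_real (s*\<sigma>)) / of_real \<sigma>)) \<longlongrightarrow> 0 * (b1 * of_real s)) (at_right 0)"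
      by (intro tendsto_intros ofr L1)
    moreover have "eventually (\<lambda>\<sigma>. of_real \<sigma> * (B (of_real (t*\<sigma>)) (of_real (s*\<sigma>)) / of_real \<sigma>) = B (of_real (t*\<sigma>)) (of_real (s*\<sigma>))) (at_right 0)"
      using evp by eventually_elim simp
    ultimately show ?thesis using tendsto_cong by force
  qed
  show "((\<lambda>\<sigma>. C (of_real (t*\<sigma>)) (of_real (s*\<sigma>))) \<longlongrightarrow> 0) (at_right 0)"
  proof -
    have "((\<lambda>\<sigma>. of_real (\<sigma>^2) * (C (of_real (t*\<sigma>)) (of_real (s*\<sigma>)) / of_real (\<sigma>^2))) \<longlongrightarrow> 0 * (c0 * of_real (t^2))) (at_right 0)"
    proof (intro tendsto_intros L3)
      show "((\<lambda>\<sigma>. complex_of_real (\<sigma>^2)) \<longlongrightarrow> 0) (at_right 0)"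
        by (rule tendsto_ofreal_pow0) auto
    qed
    moreover have "eventually (\<lambda>\<sigma>. of_real (\<sigma>^2) * (C (of_real (t*\<sigma>)) (of_real (s*\<sigma>)) / of_real (\<sigma>^2)) = C (of_real (t*\<sigma>)) (of_real (s*\<sigma>))) (at_right 0)"
      using evp by eventually_elim simp
    ultimately show ?thesis using tendsto_cong by force
  qed
qed

lemma quad_roots:
  fixes b c :: complex
  obtains l1 l2 where "l1 + l2 = - b" "l1 * l2 = c" "\<And>l. l^2 + b*l + c = (l - l1) * (l - l2)"
proof -
  define w where "w = csqrt (b^2 - 4*c)"
  have w2: "w^2 = b^2 - 4*c" by (simp add: w_def)
  define l1 where "l1 = (-b + w)/2"
  define l2 where "l2 = (-b - w)/2"
  have s: "l1 + l2 = -b" by (simp add: l1_def l2_def field_simps)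
  have p: "l1 * l2 = c"
  proof -
    have "l1 * l2 = (b^2 - w^2)/4" by (simp add: l1_def l2_def field_simps power2_eq_square)
    then show ?thesis using w2 by simp
  qed
  have "\<And>l. l^2 + b*l + c = (l - l1) * (l - l2)"
  proof -
    fix l
    have "(l - l1) * (l - l2) = l^2 - (l1+l2)*l + l1*l2" by (simp add: algebra_simps power2_eq_square)
    then show "l^2 + b*l + c = (l - l1) * (l - l2)" using s p by simp
  qed
  then show ?thesis using that s p by blast
qed

lemma root_bound:
  fixes b c l :: complex
  assumes "l^2 + b*l + c = 0"
  shows "cmod l \<le> cmod b + sqrt (cmod c)"
proof (rule ccontr)
  assume "\<not> ?thesis"
  then have gt: "cmod l > cmod b + sqrt (cmod c)" by simp
  have sq: "sqrt (cmod c) * sqrt (cmod c) = cmod c" by simp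
  have "l^2 = - (b*l + c)" using assms by (simp add: add.assoc add_eq_0_iff2 eq_neg_iff_add_eq_0)
  then have "cmod l ^ 2 = cmod (b*l + c)" by (metis norm_minus_cancel norm_power)
  also have "\<dots> \<le> cmod b * cmod l + cmod c" by (metis norm_mult norm_triangle_ineq)
  finally have 1: "cmod l * cmod l \<le> cmod b * cmod l + cmod c" by (simp add: power2_eq_square)
  have "sqrt (cmod c) \<ge> 0" by simp
  then have "cmod l * cmod l > cmod l * (cmod b + sqrt (cmod c))"
  proof -
    have "cmod l > 0" using gt \<open>sqrt (cmod c) \<ge> 0\<close> norm_ge_zero[of b] by linarith
    then show ?thesis using gt by (intro mult_strict_left_mono) auto
  qed
  moreover have "cmod l * sqrt (cmod c) \<ge> sqrt (cmod c) * sqrt (cmod c)"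
  proof -
    have "sqrt (cmod c) \<le> cmod l" using gt norm_ge_zero[of b] by linarith
    then show ?thesis by (intro mult_right_mono) auto
  qed
  ultimately show False using 1 sq by (simp add: algebra_simps)
qed

lemma D_identity:
  fixes l1 l2 :: complex
  shows "(Re (-(l1+l2)))^2 * Re (l1*l2) + Re (-(l1+l2)) * Im (-(l1+l2)) * Im (l1*l2) - (Im (l1*l2))^2
     = Re l1 * Re l2 * ((Re l1 + Re l2)^2 + (Im l1 - Im l2)^2)"
  by (simp add: algebra_simps power2_eq_square)

lemma pos_root:
  fixes b c :: complex
  assumes "Re b < 0 \<or> Dq b c < 0"
  shows "\<exists>l. l^2 + b*l + c = 0 \<and> Re l > 0"
proof -
  obtain l1 l2 where s: "l1 + l2 = - b" and p: "l1 * l2 = c" and f: "\<And>l. l^2 + b*l + c = (l - l1) * (l - l2)"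
    using quad_roots by blast
  have r1: "l1^2 + b*l1 + c = 0" and r2: "l2^2 + b*l2 + c = 0" using f by auto
  have "Re l1 > 0 \<or> Re l2 > 0"
  proof (cases "Re b < 0")
    case True
    then have "Re l1 + Re l2 > 0" using arg_cong[OF s, of Re] by simp
    then show ?thesis by linarith
  next
    case False
    then have D: "(Re b)^2 * Re c + Re b * Im b * Im c - (Im c)^2 < 0" using assms by (simp add: Dq_def)
    have bb: "b = -(l1+l2)" using s by simp
    have "Re l1 * Re l2 * ((Re l1 + Re l2)^2 + (Im l1 - Im l2)^2) < 0"
      using D D_identity[of l1 l2] unfolding bb p[symmetric] by simp
    moreover have "(Re l1 + Re l2)^2 + (Im l1 - Im l2)^2 \<ge> 0" by simp
    ultimately have "Re l1 * Re l2 < 0"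
      by (metis mult_nonneg_nonneg linorder_not_le mult_nonpos_nonneg)
    then show ?thesis by (metis mult_nonpos_nonpos linorder_not_le)
  qed
  then show ?thesis using r1 r2 by blast
qed

lemma exists_u_iii:
  fixes \<beta> q b02 b20 c20 :: real
  assumes "b02 > 0" "b20 > 0" "c20 > 0" "\<beta>*q + b02*c20 < 0"
  shows "\<exists>u>0. (b02+b20*u)^2*c20*u + (b02+b20*u)*\<beta>*q*u - q^2*u^2 < 0"
proof -
  define Q where "Q = (\<lambda>u. (b02+b20*u)^2*c20 + (b02+b20*u)*\<beta>*q - q^2*u)"
  have "(Q \<longlongrightarrow> Q 0) (at_right 0)" unfolding Q_def by (intro tendsto_intros)
  moreover have "Q 0 < 0"
  proof -
    have "Q 0 = b02 * (\<beta>*q + b02*c20)" by (simp add: Q_def power2_eq_square algebra_simps)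
    also have "\<dots> < 0" using assms by (simp add: mult_pos_neg)
    finally show ?thesis .
  qed
  ultimately have "eventually (\<lambda>u. Q u < 0) (at_right 0)" by (simp add: order_tendstoD(2))
  moreover have "eventually (\<lambda>u. u > 0) (at_right (0::real))" by (simp add: eventually_at_right_less)
  ultimately have ev: "eventually (\<lambda>u. Q u < 0 \<and> u > 0) (at_right (0::real))" by eventually_elim auto
  have "\<exists>u. Q u < 0 \<and> u > 0" using eventually_happens[OF ev] by (simp add: trivial_limit_at_right_real)
  then obtain u where u: "Q u < 0" "u > 0" by blast
  have "(b02+b20*u)^2*c20*u + (b02+b20*u)*\<beta>*q*u - q^2*u^2 = u * Q u"
    by (simp add: Q_def power2_eq_square algebra_simps)
  also have "\<dots> < 0" using u by (simp add: mult_pos_neg)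
  finally show ?thesis using u by blast
qed

lemma exists_u_ii:
  fixes \<beta> q b02 b20 c20 :: real
  assumes b02: "b02 > 0" and b20: "b20 > 0" and c20: "c20 > 0"
    and R4: "\<beta>*q*b20 + 2*b02*b20*c20 - q^2 \<le> 0"
    and I3: "q^2*((\<beta>*b20 - q)^2 - 4*b02*b20*c20) > 0"
  shows "\<exists>u>0. (b02+b20*u)^2*c20*u + (b02+b20*u)*\<beta>*q*u - q^2*u^2 < 0"
proof -
  define I where "I = q^2*((\<beta>*b20 - q)^2 - 4*b02*b20*c20)"
  define d where "d = sqrt I / (4*b20*c20)"
  define Bs where "Bs = (q^2 - \<beta>*q*b20) / (2*b20*c20)"
  define B where "B = Bs + d"
  define u where "u = (B - b02) / b20"
  have bc: "b20 * c20 > 0" using b20 c20 by simp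
  have Ipos: "I > 0" using I3 by (simp add: I_def)
  have dpos: "d > 0" using Ipos bc by (simp add: d_def)
  have d2: "d^2 = I / (16 * b20^2 * c20^2)"
    using Ipos by (simp add: d_def power_divide power_mult_distrib)
  have "B - b02 = - (\<beta>*q*b20 + 2*b02*b20*c20 - q^2) / (2*b20*c20) + d"
    using bc b20 c20 by (simp add: B_def Bs_def field_simps)
  moreover have "- (\<beta>*q*b20 + 2*b02*b20*c20 - q^2) / (2*b20*c20) \<ge> 0"
    using R4 bc by (intro divide_nonneg_pos) auto
  ultimately have "B - b02 > 0" using dpos by linarith
  then have upos: "u > 0" using b20 by (simp add: u_def)
  have Bu: "b02 + b20*u = B" using b20 by (simp add: u_def field_simps)
  have key: "b20 * (B^2*c20 + B*\<beta>*q - q^2*u) = b20*c20*(B - Bs)^2 - I/(4*b20*c20)"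
    using bc b20 c20 unfolding u_def Bs_def I_def
    by (simp add: field_simps power2_eq_square)
  have "b20*c20*(B - Bs)^2 - I/(4*b20*c20) = b20*c20*d^2 - I/(4*b20*c20)" by (simp add: B_def)
  also have "\<dots> = - 3 * I / (16*b20*c20)"
    using bc b20 c20 unfolding d2 by (simp add: field_simps power2_eq_square)
  also have "\<dots> < 0" using Ipos bc by (simp add: divide_neg_pos)
  finally have "b20 * (B^2*c20 + B*\<beta>*q - q^2*u) < 0" using key by simp
  then have Qn: "B^2*c20 + B*\<beta>*q - q^2*u < 0" using b20 by (simp add: mult_less_0_iff)
  have "(b02+b20*u)^2*c20*u + (b02+b20*u)*\<beta>*q*u - q^2*u^2 = u * (B^2*c20 + B*\<beta>*q - q^2*u)"
    unfolding Bu by (simp add: power2_eq_square algebra_simps)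
  also have "\<dots> < 0" using upos Qn by (simp add: mult_pos_neg)
  finally show ?thesis using upos by blast
qed

lemma finish:
  fixes E h :: "complex \<Rightarrow> complex \<Rightarrow> complex \<Rightarrow> complex" and b c :: "complex \<Rightarrow> complex \<Rightarrow> complex"
    and t s r delta :: real
  assumes factor: "\<forall>l y z. cmod l < delta \<longrightarrow> cmod y < delta \<longrightarrow> cmod z < delta \<longrightarrow>
                   E l y z = (l\<^sup>2 + b y z * l + c y z) * h l y z"
    and delta: "delta > 0" and r: "r > 0" and M: "\<bar>t\<bar> + \<bar>s\<bar> > 0"
    and ev: "eventually (\<lambda>\<sigma>. Re (b (of_real (t*\<sigma>)) (of_real (s*\<sigma>))) < 0 \<or>
        Dq (b (of_real (t*\<sigma>)) (of_real (s*\<sigma>))) (c (of_real (t*\<sigma>)) (of_real (s*\<sigma>))) < 0) (at_right 0)"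
    and lb: "((\<lambda>\<sigma>. b (of_real (t*\<sigma>)) (of_real (s*\<sigma>))) \<longlongrightarrow> 0) (at_right 0)"
    and lc: "((\<lambda>\<sigma>. c (of_real (t*\<sigma>)) (of_real (s*\<sigma>))) \<longlongrightarrow> 0) (at_right 0)"
  shows "\<exists>eta xi :: real. 0 < \<bar>eta\<bar> + \<bar>xi\<bar> \<and> \<bar>eta\<bar> + \<bar>xi\<bar> < r \<and>
           (\<exists>l::complex. l\<^sup>2 + b (complex_of_real eta) (complex_of_real xi) * l
                           + c (complex_of_real eta) (complex_of_real xi) = 0
              \<and> Re l > 0 \<and> cmod l < r
              \<and> E l (complex_of_real eta) (complex_of_real xi) = 0)"
proof -
  define m where "m = min r delta"
  have m: "m > 0" using r delta by (simp add: m_def)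
  define M where "M = \<bar>t\<bar> + \<bar>s\<bar>"
  have "((\<lambda>\<sigma>. cmod (b (of_real (t*\<sigma>)) (of_real (s*\<sigma>))) + sqrt (cmod (c (of_real (t*\<sigma>)) (of_real (s*\<sigma>)))))
      \<longlongrightarrow> cmod (0::complex) + sqrt (cmod (0::complex))) (at_right 0)"
    by (intro tendsto_intros lb lc)
  then have ev1: "eventually (\<lambda>\<sigma>. cmod (b (of_real (t*\<sigma>)) (of_real (s*\<sigma>))) + sqrt (cmod (c (of_real (t*\<sigma>)) (of_real (s*\<sigma>)))) < m) (at_right 0)"
    using m by (intro order_tendstoD(2)) auto
  have "((\<lambda>\<sigma>. \<sigma> * M) \<longlongrightarrow> 0 * M) (at_right 0)"
    by (intro tendsto_intros)
  then have ev2: "eventually (\<lambda>\<sigma>. \<sigma> * M < m) (at_right 0)"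
    using m by (intro order_tendstoD(2)) auto
  have ev3: "eventually (\<lambda>\<sigma>. \<sigma> > 0) (at_right (0::real))"
    by (simp add: eventually_at_right_less)
  have "eventually (\<lambda>\<sigma>. \<sigma> > 0 \<and> \<sigma> * M < m \<and>
      cmod (b (of_real (t*\<sigma>)) (of_real (s*\<sigma>))) + sqrt (cmod (c (of_real (t*\<sigma>)) (of_real (s*\<sigma>)))) < m \<and>
      (Re (b (of_real (t*\<sigma>)) (of_real (s*\<sigma>))) < 0 \<or>
        Dq (b (of_real (t*\<sigma>)) (of_real (s*\<sigma>))) (c (of_real (t*\<sigma>)) (of_real (s*\<sigma>))) < 0)) (at_right 0)"
    using ev ev1 ev2 ev3 by eventually_elim auto
  from eventually_happens[OF this] obtain \<sigma> where \<sigma>: "\<sigma> > 0" "\<sigma> * M < m"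
    "cmod (b (of_real (t*\<sigma>)) (of_real (s*\<sigma>))) + sqrt (cmod (c (of_real (t*\<sigma>)) (of_real (s*\<sigma>)))) < m"
    "Re (b (of_real (t*\<sigma>)) (of_real (s*\<sigma>))) < 0 \<or>
        Dq (b (of_real (t*\<sigma>)) (of_real (s*\<sigma>))) (c (of_real (t*\<sigma>)) (of_real (s*\<sigma>))) < 0"
    by (auto simp: trivial_limit_at_right_real)
  define eta where "eta = t * \<sigma>"
  define xi where "xi = s * \<sigma>"
  obtain l where l: "l^2 + b (of_real eta) (of_real xi) * l + c (of_real eta) (of_real xi) = 0" "Re l > 0"
    using pos_root[OF \<sigma>(4)] unfolding eta_def xi_def by blast
  have lm: "cmod l < m"
    using root_bound[OF l(1)] \<sigma>(3) unfolding eta_def xi_def by linarith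
  have sum: "\<bar>eta\<bar> + \<bar>xi\<bar> = \<sigma> * M" using \<sigma>(1) by (simp add: eta_def xi_def M_def abs_mult algebra_simps)
  have "\<bar>eta\<bar> \<le> \<bar>eta\<bar> + \<bar>xi\<bar>" "\<bar>xi\<bar> \<le> \<bar>eta\<bar> + \<bar>xi\<bar>" by auto
  then have small: "cmod (complex_of_real eta) < delta" "cmod (complex_of_real xi) < delta"
    using sum \<sigma>(2) unfolding m_def by auto
  have E0: "E l (of_real eta) (of_real xi) = 0"
    using factor[rule_format, OF _ small] lm l(1) unfolding m_def by simp
  have pos: "0 < \<bar>eta\<bar> + \<bar>xi\<bar>" using sum \<sigma>(1) M unfolding M_def by simp
  show ?thesis
    using pos sum \<sigma>(2) l lm E0 unfolding m_def by (intro exI[of _ eta] exI[of _ xi]) auto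
qed


lemma D_scale:
  fixes \<sigma> a1 a2 c1 c2 x1 x2 x3 x4 :: real
  assumes "\<sigma> > 0" "a1 = \<sigma>^2*x1" "a2 = \<sigma>*x2" "c1 = \<sigma>^2*x3" "c2 = \<sigma>^3*x4"
    "x1^2*x3 + x1*x2*x4 - x4^2 < 0"
  shows "a1^2*c1 + a1*a2*c2 - c2^2 < 0"
proof -
  have "a1^2*c1 + a1*a2*c2 - c2^2 = \<sigma>^6 * (x1^2*x3 + x1*x2*x4 - x4^2)"
    using assms by (simp add: power2_eq_square power3_eq_cube algebra_simps)
       (simp add: numeral_eq_Suc algebra_simps)
  also have "\<dots> < 0" using assms by (simp add: mult_pos_neg)
  finally show ?thesis .
qed

theorem mainTheorem14:
  fixes E h :: "complex \<Rightarrow> complex \<Rightarrow> complex \<Rightarrow> complex"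
    and b c :: "complex \<Rightarrow> complex \<Rightarrow> complex"
    and a ha :: "nat \<Rightarrow> nat \<Rightarrow> nat \<Rightarrow> complex"
    and bk ck :: "nat \<Rightarrow> nat \<Rightarrow> complex"
    and rho rhoh rhob rhoc delta :: real
  assumes E_an: "ps3 a rho E"
    and a_real: "\<forall>i j k. \<exists>t::real. a i j k = \<i> ^ (j + k) * complex_of_real t"
    and E_even: "\<forall>l y z. cmod l < rho \<longrightarrow> cmod y < rho \<longrightarrow> cmod z < rho \<longrightarrow>
                   E l (- y) z = E l y z"
    and E_zero: "\<forall>z. cmod z < rho \<longrightarrow> E 0 0 z = 0"
    and a100: "a 1 0 0 = 0"
    and a200: "a 2 0 0 \<noteq> 0"
    and a020: "a 0 2 0 \<noteq> 0"
    and h_an: "ps3 ha rhoh h"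
    and h0: "h 0 0 0 \<noteq> 0"
    and b_an: "ps2 bk rhob b"
    and c_an: "ps2 ck rhoc c"
    and delta: "delta > 0"
    and factor: "\<forall>l y z. cmod l < delta \<longrightarrow> cmod y < delta \<longrightarrow> cmod z < delta \<longrightarrow>
                   E l y z = (l\<^sup>2 + b y z * l + c y z) * h l y z"
    and b_low: "bk 0 0 = 0" "bk 1 0 = 0" "bk 1 1 = 0"
    and c_low: "\<forall>k. ck 0 k = 0" "\<forall>k. ck 1 k = 0" "ck 3 0 = 0"
    and c20_pos: "ck 2 0 \<in> \<real>" "Re (ck 2 0) > 0"
    and cases:
      "let b01 = bk 0 1; b02 = bk 0 2; b20 = bk 2 0; c20 = ck 2 0; c21 = ck 2 1;
           ind1 = b02; ind2 = b20;
           ind3 = c21\<^sup>2 * (b01\<^sup>2 * b20\<^sup>2 - 2 * b01 * b20 * c21 + 4 * b02 * b20 * c20 + c21\<^sup>2);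
           ind4 = - b01 * b20 * c21 + 2 * b02 * b20 * c20 + c21\<^sup>2;
           ind5 = - b01 * c21 + b02 * c20
       in ((ind1 \<in> \<real> \<and> Re ind1 < 0) \<or> (ind2 \<in> \<real> \<and> Re ind2 < 0))
        \<or> (ind1 \<in> \<real> \<and> Re ind1 > 0 \<and> ind2 \<in> \<real> \<and> Re ind2 > 0 \<and> ind3 \<in> \<real> \<and> Re ind3 > 0
             \<and> ind4 \<in> \<real> \<and> Re ind4 \<le> 0)
        \<or> (ind1 \<in> \<real> \<and> Re ind1 > 0 \<and> ind2 \<in> \<real> \<and> Re ind2 > 0 \<and> ind3 \<in> \<real> \<and> Re ind3 > 0
             \<and> ind5 \<in> \<real> \<and> Re ind5 < 0)"
  shows "\<forall>r>0. \<exists>eta xi :: real. 0 < \<bar>eta\<bar> + \<bar>xi\<bar> \<and> \<bar>eta\<bar> + \<bar>xi\<bar> < r \<and>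
           (\<exists>l::complex. l\<^sup>2 + b (complex_of_real eta) (complex_of_real xi) * l
                           + c (complex_of_real eta) (complex_of_real xi) = 0
              \<and> Re l > 0 \<and> cmod l < r
              \<and> E l (complex_of_real eta) (complex_of_real xi) = 0)"
proof (intro allI impI)
  fix r :: real assume r: "r > 0"
  have supb: "0 \<le> j \<and> 3 \<le> j + k" if a: "(j,k) \<notin> {(0,1),(0,2),(2,0)}" "bk j k \<noteq> 0" for j k :: nat
  proof (rule ccontr)
    assume "\<not> (0 \<le> j \<and> 3 \<le> j + k)"
    then have "j + k < 3" by auto
    then have "(j,k) \<in> {(0,0),(0,1),(0,2),(1,0),(1,1),(2,0)}" by (auto simp: less_Suc_eq)
    then show False using a b_low by auto
  qed
  have supc: "2 \<le> j \<and> 4 \<le> j + k" if a: "(j,k) \<notin> {(2,0),(2,1)}" "ck j k \<noteq> 0" for j k :: nat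
  proof (rule ccontr)
    assume H: "\<not> (2 \<le> j \<and> 4 \<le> j + k)"
    show False
    proof (cases "j < 2")
      case True
      then have "j = 0 \<or> j = 1" by auto
      then show False using a c_low by auto
    next
      case False
      then have "2 \<le> j" "j + k < 4" using H by auto
      then have "(j,k) \<in> {(2,0),(2,1),(3,0)}" by (auto simp: less_Suc_eq)
      then show False using a c_low by auto
    qed
  qed
  have sumb: "(\<Sum>(j,k)\<in>{(0,1),(0,2),(2,0)}. bk j k * y^j * z^k) = bk 0 1 * z + bk 0 2 * z^2 + bk 2 0 * y^2"
    for y z :: complex by (simp add: add.assoc)
  have sumc: "(\<Sum>(j,k)\<in>{(2,0),(2,1)}. ck j k * y^j * z^k) = ck 2 0 * y^2 + ck 2 1 * y^2 * z"
    for y z :: complex by simp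
  have "\<exists>s>0. \<exists>K. \<forall>y z. cmod y + cmod z \<le> s \<longrightarrow>
     cmod (b y z - (\<Sum>(j,k)\<in>{(0,1),(0,2),(2,0)}. bk j k * y^j * z^k)) \<le> K * cmod y ^ 0 * (cmod y + cmod z)^(3-0)"
    by (rule ps2_tail[OF b_an]) (use supb in auto)
  then obtain sb Kb where sb: "sb > 0" and Bb: "\<forall>y z. cmod y + cmod z \<le> sb \<longrightarrow>
      cmod (b y z - (bk 0 1 * z + bk 0 2 * z^2 + bk 2 0 * y^2)) \<le> Kb * (cmod y + cmod z)^3"
    unfolding sumb by auto
  have "\<exists>s>0. \<exists>K. \<forall>y z. cmod y + cmod z \<le> s \<longrightarrow>
     cmod (c y z - (\<Sum>(j,k)\<in>{(2,0),(2,1)}. ck j k * y^j * z^k)) \<le> K * cmod y ^ 2 * (cmod y + cmod z)^(4-2)"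
    by (rule ps2_tail[OF c_an]) (use supc in auto)
  then obtain sc Kc where sc: "sc > 0" and Cb: "\<forall>y z. cmod y + cmod z \<le> sc \<longrightarrow>
      cmod (c y z - (ck 2 0 * y^2 + ck 2 1 * y^2 * z)) \<le> Kc * cmod y^2 * (cmod y + cmod z)^2"
    unfolding sumc by auto
  note LL = line_limits[OF Bb Cb sb sc]
  note fin = finish[OF factor delta r]
  have evp: "eventually (\<lambda>\<sigma>. \<sigma> > 0) (at_right (0::real))"
    by (simp add: eventually_at_right_less)
  show "\<exists>eta xi :: real. 0 < \<bar>eta\<bar> + \<bar>xi\<bar> \<and> \<bar>eta\<bar> + \<bar>xi\<bar> < r \<and>
           (\<exists>l::complex. l\<^sup>2 + b (complex_of_real eta) (complex_of_real xi) * l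
                           + c (complex_of_real eta) (complex_of_real xi) = 0
              \<and> Re l > 0 \<and> cmod l < r
              \<and> E l (complex_of_real eta) (complex_of_real xi) = 0)" (is ?G)
  proof -
    define I3 where "I3 = (ck 2 1)\<^sup>2 * ((bk 0 1)\<^sup>2 * (bk 2 0)\<^sup>2 - 2 * bk 0 1 * bk 2 0 * ck 2 1 + 4 * bk 0 2 * bk 2 0 * ck 2 0 + (ck 2 1)\<^sup>2)"
    define I4 where "I4 = - bk 0 1 * bk 2 0 * ck 2 1 + 2 * bk 0 2 * bk 2 0 * ck 2 0 + (ck 2 1)\<^sup>2"
    define I5 where "I5 = - bk 0 1 * ck 2 1 + bk 0 2 * ck 2 0"
    have cs: "Re (bk 0 1) \<noteq> 0 \<or> (Re (bk 0 1) = 0 \<and> bk 0 2 \<in> \<real> \<and> Re (bk 0 2) < 0)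
      \<or> (bk 2 0 \<in> \<real> \<and> Re (bk 2 0) < 0)
      \<or> (Re (bk 0 1) = 0 \<and> bk 0 2 \<in> \<real> \<and> Re (bk 0 2) > 0 \<and> bk 2 0 \<in> \<real> \<and> Re (bk 2 0) > 0 \<and>
          ((I3 \<in> \<real> \<and> Re I3 > 0 \<and> I4 \<in> \<real> \<and> Re I4 \<le> 0) \<or> (I5 \<in> \<real> \<and> Re I5 < 0)))"
      using cases unfolding Let_def I3_def[symmetric] I4_def[symmetric] I5_def[symmetric] by blast
    then consider (A) "Re (bk 0 1) \<noteq> 0" | (B) "Re (bk 0 1) = 0" "bk 0 2 \<in> \<real>" "Re (bk 0 2) < 0"
      | (C) "bk 2 0 \<in> \<real>" "Re (bk 2 0) < 0"
      | (D) "Re (bk 0 1) = 0" "bk 0 2 \<in> \<real>" "Re (bk 0 2) > 0" "bk 2 0 \<in> \<real>" "Re (bk 2 0) > 0"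
          "(I3 \<in> \<real> \<and> Re I3 > 0 \<and> I4 \<in> \<real> \<and> Re I4 \<le> 0) \<or> (I5 \<in> \<real> \<and> Re I5 < 0)"
      by blast
    then show ?G
    proof cases
      case A
      define s0 where "s0 = (if Re (bk 0 1) > 0 then -1 else (1::real))"
      have l: "((\<lambda>\<sigma>. Re (b (of_real (0*\<sigma>)) (of_real (s0*\<sigma>)) / of_real \<sigma>)) \<longlongrightarrow> Re (bk 0 1 * of_real s0)) (at_right 0)"
        by (rule tendsto_Re[OF LL(1)])
      have neg: "Re (bk 0 1 * of_real s0) < 0" using A by (auto simp: s0_def)
      have "eventually (\<lambda>\<sigma>. Re (b (of_real (0*\<sigma>)) (of_real (s0*\<sigma>)) / of_real \<sigma>) < 0) (at_right 0)"
        using order_tendstoD(2)[OF l neg] .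
      then have ev: "eventually (\<lambda>\<sigma>. Re (b (of_real (0*\<sigma>)) (of_real (s0*\<sigma>))) < 0 \<or>
          Dq (b (of_real (0*\<sigma>)) (of_real (s0*\<sigma>))) (c (of_real (0*\<sigma>)) (of_real (s0*\<sigma>))) < 0) (at_right 0)"
        using evp by eventually_elim (auto simp: divide_less_0_iff)
      show ?G by (rule fin[OF _ ev LL(5) LL(6)]) (simp add: s0_def)
    next
      case B
      have l: "((\<lambda>\<sigma>. Re ((b (of_real (0*\<sigma>)) (of_real (1*\<sigma>)) - bk 0 1 * of_real (1*\<sigma>)) / of_real (\<sigma>^2)))
          \<longlongrightarrow> Re (bk 0 2 * of_real (1^2) + bk 2 0 * of_real (0^2))) (at_right 0)"
        by (rule tendsto_Re[OF LL(2)])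
      have neg: "Re (bk 0 2 * of_real (1^2) + bk 2 0 * of_real (0^2)) < 0" using B by simp
      have "eventually (\<lambda>\<sigma>. Re ((b (of_real (0*\<sigma>)) (of_real (1*\<sigma>)) - bk 0 1 * of_real (1*\<sigma>)) / of_real (\<sigma>^2)) < 0) (at_right 0)"
        using order_tendstoD(2)[OF l neg] .
      then have ev: "eventually (\<lambda>\<sigma>. Re (b (of_real (0*\<sigma>)) (of_real (1*\<sigma>))) < 0 \<or>
          Dq (b (of_real (0*\<sigma>)) (of_real (1*\<sigma>))) (c (of_real (0*\<sigma>)) (of_real (1*\<sigma>))) < 0) (at_right 0)"
        using evp by eventually_elim (use B(1) in \<open>auto simp: divide_less_0_iff\<close>)
      show ?G by (rule fin[OF _ ev LL(5) LL(6)]) simp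
    next
      case C
      have l: "((\<lambda>\<sigma>. Re ((b (of_real (1*\<sigma>)) (of_real (0*\<sigma>)) - bk 0 1 * of_real (0*\<sigma>)) / of_real (\<sigma>^2)))
          \<longlongrightarrow> Re (bk 0 2 * of_real (0^2) + bk 2 0 * of_real (1^2))) (at_right 0)"
        by (rule tendsto_Re[OF LL(2)])
      have neg: "Re (bk 0 2 * of_real (0^2) + bk 2 0 * of_real (1^2)) < 0" using C by simp
      have "eventually (\<lambda>\<sigma>. Re ((b (of_real (1*\<sigma>)) (of_real (0*\<sigma>)) - bk 0 1 * of_real (0*\<sigma>)) / of_real (\<sigma>^2)) < 0) (at_right 0)"
        using order_tendstoD(2)[OF l neg] .
      then have ev: "eventually (\<lambda>\<sigma>. Re (b (of_real (1*\<sigma>)) (of_real (0*\<sigma>))) < 0 \<or>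
          Dq (b (of_real (1*\<sigma>)) (of_real (0*\<sigma>))) (c (of_real (1*\<sigma>)) (of_real (0*\<sigma>))) < 0) (at_right 0)"
        using evp by eventually_elim (auto simp: divide_less_0_iff)
      show ?G by (rule fin[OF _ ev LL(5) LL(6)]) simp
    next
      case D
      define \<beta> where "\<beta> = Im (bk 0 1)"
      define p where "p = Re (ck 2 1)"
      define q where "q = Im (ck 2 1)"
      define B02 where "B02 = Re (bk 0 2)"
      define B20 where "B20 = Re (bk 2 0)"
      define C20 where "C20 = Re (ck 2 0)"
      have e01: "bk 0 1 = Complex 0 \<beta>" using D(1) by (simp add: \<beta>_def complex_eq_iff)
      have e02: "bk 0 2 = Complex B02 0" using D(2) by (simp add: B02_def complex_eq_iff complex_is_Real_iff)
      have e20: "bk 2 0 = Complex B20 0" using D(4) by (simp add: B20_def complex_eq_iff complex_is_Real_iff)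
      have ec20: "ck 2 0 = Complex C20 0" using c20_pos(1) by (simp add: C20_def complex_eq_iff complex_is_Real_iff)
      have ec21: "ck 2 1 = Complex p q" by (simp add: p_def q_def complex_eq_iff)
      have pos: "B02 > 0" "B20 > 0" "C20 > 0" using D c20_pos by (auto simp: B02_def B20_def C20_def)
      obtain u where u: "u > 0" "(B02+B20*u)^2*C20*u + (B02+B20*u)*\<beta>*q*u - q^2*u^2 < 0"
      proof -
        consider "I3 \<in> \<real>" "Re I3 > 0" "I4 \<in> \<real>" "Re I4 \<le> 0" | "I5 \<in> \<real>" "Re I5 < 0" using D(6) by blast
        then show ?thesis
        proof cases
          case 1
          have im4: "Im I4 = p * (2*q - \<beta>*B20)"
            unfolding I4_def e01 e02 e20 ec20 ec21 by (simp add: power2_eq_square algebra_simps)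
          have re4: "Re I4 = \<beta>*q*B20 + 2*B02*B20*C20 + p^2 - q^2"
            unfolding I4_def e01 e02 e20 ec20 ec21 by (simp add: power2_eq_square algebra_simps)
          have p0: "p = 0"
          proof (rule ccontr)
            assume "p \<noteq> 0"
            moreover have "Im I4 = 0" using 1(3) by (simp add: complex_is_Real_iff)
            ultimately have h: "2*q = \<beta>*B20" using im4 by simp
            have "\<beta>*q*B20 = q*(\<beta>*B20)" by (simp add: mult_ac)
            also have "\<dots> = 2*q^2" using h by (simp add: power2_eq_square)
            finally have "Re I4 = q^2 + 2*B02*B20*C20 + p^2" using re4 by simp
            moreover have "B02*B20*C20 > 0" using pos by simp
            moreover have "p^2 > 0" using \<open>p \<noteq> 0\<close> by simp
            moreover have "q^2 \<ge> 0" by simp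
            moreover have "2*B02*B20*C20 = 2*(B02*B20*C20)" by simp
            ultimately have "Re I4 > 0" by linarith
            then show False using 1(4) by simp
          qed
          have re3: "Re I3 = q^2*((\<beta>*B20 - q)^2 - 4*B02*B20*C20)"
            unfolding I3_def e01 e02 e20 ec20 ec21 by (simp add: p0 power2_eq_square algebra_simps)
          show ?thesis
          proof (rule exists_u_ii[OF pos, THEN exE])
            show "\<beta>*q*B20 + 2*B02*B20*C20 - q^2 \<le> 0" using re4 1(4) p0 by simp
            show "q^2*((\<beta>*B20 - q)^2 - 4*B02*B20*C20) > 0" using re3 1(2) by simp
          qed (use that in blast)
        next
          case 2
          have re5: "Re I5 = \<beta>*q + B02*C20"
            unfolding I5_def e01 e02 e20 ec20 ec21 by (simp add: algebra_simps)
          show ?thesis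
          proof (rule exists_u_iii[OF pos, THEN exE])
            show "\<beta>*q + B02*C20 < 0" using re5 2(2) by simp
          qed (use that in blast)
        qed
      qed
      define t where "t = sqrt u"
      have t2: "t^2 = u" using u by (simp add: t_def)
      define X1 where "X1 = (\<lambda>\<sigma>. Re ((b (of_real (t*\<sigma>)) (of_real (1*\<sigma>)) - bk 0 1 * of_real (1*\<sigma>)) / of_real (\<sigma>^2)))"
      define X2 where "X2 = (\<lambda>\<sigma>. Im (b (of_real (t*\<sigma>)) (of_real (1*\<sigma>)) / of_real \<sigma>))"
      define X3 where "X3 = (\<lambda>\<sigma>. Re (c (of_real (t*\<sigma>)) (of_real (1*\<sigma>)) / of_real (\<sigma>^2)))"
      define X4 where "X4 = (\<lambda>\<sigma>. Im ((c (of_real (t*\<sigma>)) (of_real (1*\<sigma>)) - ck 2 0 * of_real ((t*\<sigma>)^2)) / of_real (\<sigma>^3)))"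
      have l1: "(X1 \<longlongrightarrow> Re (bk 0 2 * of_real (1^2) + bk 2 0 * of_real (t^2))) (at_right 0)"
        unfolding X1_def by (rule tendsto_Re[OF LL(2)])
      have l2: "(X2 \<longlongrightarrow> Im (bk 0 1 * of_real 1)) (at_right 0)"
        unfolding X2_def by (rule tendsto_Im[OF LL(1)])
      have l3: "(X3 \<longlongrightarrow> Re (ck 2 0 * of_real (t^2))) (at_right 0)"
        unfolding X3_def by (rule tendsto_Re[OF LL(3)])
      have l4: "(X4 \<longlongrightarrow> Im (ck 2 1 * of_real (t^2 * 1))) (at_right 0)"
        unfolding X4_def by (rule tendsto_Im[OF LL(4)])
      have v1: "Re (bk 0 2 * of_real (1^2) + bk 2 0 * of_real (t^2)) = B02 + B20*u"
        using t2 by (simp add: B02_def B20_def)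
      have v2: "Im (bk 0 1 * of_real 1) = \<beta>" by (simp add: \<beta>_def)
      have v3: "Re (ck 2 0 * of_real (t^2)) = C20*u" using t2 by (simp add: C20_def)
      have v4: "Im (ck 2 1 * of_real (t^2 * 1)) = q*u" using t2 by (simp add: q_def)
      have "((\<lambda>\<sigma>. (X1 \<sigma>)^2 * X3 \<sigma> + X1 \<sigma> * X2 \<sigma> * X4 \<sigma> - (X4 \<sigma>)^2) \<longlongrightarrow>
          (B02 + B20*u)^2 * (C20*u) + (B02 + B20*u) * \<beta> * (q*u) - (q*u)^2) (at_right 0)"
        using l1 l2 l3 l4 unfolding v1 v2 v3 v4 by (intro tendsto_intros)
      moreover have "(B02 + B20*u)^2 * (C20*u) + (B02 + B20*u) * \<beta> * (q*u) - (q*u)^2 < 0"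
        using u(2) by (simp add: power2_eq_square algebra_simps)
      ultimately have evX: "eventually (\<lambda>\<sigma>. (X1 \<sigma>)^2 * X3 \<sigma> + X1 \<sigma> * X2 \<sigma> * X4 \<sigma> - (X4 \<sigma>)^2 < 0) (at_right 0)"
        by (rule order_tendstoD(2))
      have ev: "eventually (\<lambda>\<sigma>. Re (b (of_real (t*\<sigma>)) (of_real (1*\<sigma>))) < 0 \<or>
          Dq (b (of_real (t*\<sigma>)) (of_real (1*\<sigma>))) (c (of_real (t*\<sigma>)) (of_real (1*\<sigma>))) < 0) (at_right 0)"
        using evX evp
      proof eventually_elim
        case (elim \<sigma>)
        let ?B = "b (of_real (t*\<sigma>)) (of_real (1*\<sigma>))"
        let ?C = "c (of_real (t*\<sigma>)) (of_real (1*\<sigma>))"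
        have a1: "Re ?B = \<sigma>^2 * X1 \<sigma>" using elim(2) D(1) by (simp add: X1_def)
        have a2: "Im ?B = \<sigma> * X2 \<sigma>" using elim(2) by (simp add: X2_def)
        have a3: "Re ?C = \<sigma>^2 * X3 \<sigma>" using elim(2) by (simp add: X3_def)
        have a4: "Im ?C = \<sigma>^3 * X4 \<sigma>" using elim(2) ec20 by (simp add: X4_def)
        have "Dq ?B ?C < 0" unfolding Dq_def by (rule D_scale[OF elim(2) a1 a2 a3 a4 elim(1)])
        then show ?case by simp
      qed
      show ?G by (rule fin[OF _ ev LL(5) LL(6)]) simp
    qed
  qed
qed

end
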